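(* Let $P$ and $W$ be finite point sets in the plane with $|P|>1$, $|W|>1$ and $P\cup W$ in general position. For $p\in P$ let $V(p)$ be the (closed, convex, possibly unbounded polygonal) Voronoi region of $p$ in the Voronoi diagram of $W\cup\{p\}$. Then for distinct $p,q\in P$: (i) the set $\partial V(p)\cap\partial V(q)$ is either empty, or consists of at most two points, or is a single connected subset of a line (a segment or ray); and if $V(p)\cap V(q)\ne\varnothing$ then $\partial V(p)\cap\partial V(q)\neq\varnothing$. (ii) If $W\neq\{p,q\}$, then $p$ and $q$ are adjacent in $\mathrm{DG}^-(P,W)$ if and only if $\partial V(p)\cap\partial V(q)\neq\varnothing$.
   Context: Let $P$ (the vertices) and $W$ (the witnesses) be finite point sets in $\mathbb{R}^2$; $P$ and $W$ may share points. The witness Delaunay graph $\mathrm{DG}^-(P,W)$ is the graph with vertex set $P$ in which distinct $x,y\in P$ are adjacent if and only if there is an open disk containing no point of $W$ whose bounding circle passes through $x$ and $y$. General position of $P\cup W$ means that no three distinct points of $P\cup W$ are collinear and no four distinct points of $P\cup W$ are concyclic. For a finite set $Q$ and $a\in Q$, the Voronoi region of $a$ is $\{x\in\mathbb{R}^2: |x-a|\le |x-b| \text{ for all } b\in Q\}$. *)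

theory Defs
  imports "HOL-Analysis.Analysis"
begin

type_synonym pt = "real^2"

definition concyclic :: "pt set \<Rightarrow> bool" where
  "concyclic S \<longleftrightarrow> (\<exists>c r. r > 0 \<and> S \<subseteq> sphere c r)"

definition general_position :: "pt set \<Rightarrow> bool" where
  "general_position S \<longleftrightarrow>
     (\<forall>a\<in>S. \<forall>b\<in>S. \<forall>c\<in>S. a \<noteq> b \<and> a \<noteq> c \<and> b \<noteq> c \<longrightarrow> \<not> collinear {a, b, c}) \<and>
     (\<forall>a\<in>S. \<forall>b\<in>S. \<forall>c\<in>S. \<forall>d\<in>S.
        distinct [a, b, c, d] \<longrightarrow> \<not> concyclic {a, b, c, d})"

definition voronoi_region :: "pt set \<Rightarrow> pt \<Rightarrow> pt set" where
  "voronoi_region Q a = {x. \<forall>b\<in>Q. dist x a \<le> dist x b}"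

definition witness_adj :: "pt set \<Rightarrow> pt set \<Rightarrow> pt \<Rightarrow> pt \<Rightarrow> bool" where
  "witness_adj P W x y \<longleftrightarrow> x \<in> P \<and> y \<in> P \<and> x \<noteq> y \<and>
     (\<exists>c r. r > 0 \<and> dist c x = r \<and> dist c y = r \<and> ball c r \<inter> W = {})"

end

theory Submission imports Defs begin

lemma dist_sq_aff:
  fixes y a b :: "'a::real_inner"
  shows "(dist y a)^2 - (dist y b)^2 = 2 * (y \<bullet> (b - a)) + (a \<bullet> a - b \<bullet> b)"
  by (simp add: dist_norm power2_norm_eq_inner inner_diff_left inner_diff_right inner_commute algebra_simps)

lemma dist_le_aff:
  fixes y a b :: "'a::real_inner"
  shows "dist y a \<le> dist y b \<longleftrightarrow> 2 * (y \<bullet> (b - a)) + (a \<bullet> a - b \<bullet> b) \<le> 0"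
proof -
  have "dist y a \<le> dist y b \<longleftrightarrow> (dist y a)^2 \<le> (dist y b)^2"
    by (simp add: power_mono_iff)
  also have "\<dots> \<longleftrightarrow> (dist y a)^2 - (dist y b)^2 \<le> 0" by simp
  finally show ?thesis unfolding dist_sq_aff .
qed

lemma dist_eq_aff:
  fixes y a b :: "'a::real_inner"
  shows "dist y a = dist y b \<longleftrightarrow> 2 * (y \<bullet> (b - a)) + (a \<bullet> a - b \<bullet> b) = 0"
proof -
  have "y \<bullet> (a - b) = - (y \<bullet> (b - a))" by (simp add: inner_diff_right)
  then show ?thesis using dist_le_aff[of y a b] dist_le_aff[of y b a] by linarith
qed

lemma perp2:
  fixes u v :: "real^2"
  assumes "u \<noteq> 0" "u$1 * v$2 - u$2 * v$1 = 0"
  shows "v = ((v \<bullet> u) / (u \<bullet> u)) *\<^sub>R u"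
proof -
  have nz: "u$1 * u$1 + u$2 * u$2 \<noteq> 0"
  proof
    assume "u$1 * u$1 + u$2 * u$2 = 0"
    then have "u$1 = 0" "u$2 = 0" by (simp_all add: sum_squares_eq_zero_iff)
    then have "u = 0" by (simp add: vec_eq_iff forall_2)
    with assms show False by simp
  qed
  have uu: "u \<bullet> u = u$1 * u$1 + u$2 * u$2" by (simp add: inner_vec_def sum_2)
  have vu: "v \<bullet> u = v$1 * u$1 + v$2 * u$2" by (simp add: inner_vec_def sum_2)
  have e1: "v$1 * (u$1 * u$1 + u$2 * u$2) = (v$1 * u$1 + v$2 * u$2) * u$1"
    using assms(2) by algebra
  have e2: "v$2 * (u$1 * u$1 + u$2 * u$2) = (v$1 * u$1 + v$2 * u$2) * u$2"
    using assms(2) by algebra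
  show ?thesis
    unfolding uu vu using e1 e2 nz
    by (simp add: vec_eq_iff forall_2 field_simps)
qed

lemma three_le2:
  assumes "\<And>x y z. x\<in>A \<Longrightarrow> y\<in>A \<Longrightarrow> z\<in>A \<Longrightarrow> x\<noteq>y \<Longrightarrow> x\<noteq>z \<Longrightarrow> y\<noteq>z \<Longrightarrow> False"
  shows "finite A \<and> card A \<le> 2"
proof (cases "A = {}")
  case True then show ?thesis by simp
next
  case False
  then obtain x where x: "x \<in> A" by blast
  show ?thesis
  proof (cases "A = {x}")
    case True then show ?thesis by simp
  next
    case False
    then obtain y where y: "y \<in> A" "y \<noteq> x" using x by blast
    have "A \<subseteq> {x, y}" using assms x y by blast
    moreover have "card {x,y} \<le> 2" by (simp add: card_insert_le_m1)
    ultimately show ?thesis by (meson card_mono dual_order.trans finite.emptyI finite.insertI finite_subset)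
  qed
qed

lemma zero_mid:
  fixes a b :: "'w \<Rightarrow> real"
  assumes "\<forall>w\<in>A. a w \<noteq> 0" "\<forall>w\<in>A. a w*t1+b w \<le> 0" "\<forall>w\<in>A. a w*t3+b w \<le> 0"
    "w\<in>A" "a w*t2+b w=0" "t1<t2" "t2<t3"
  shows False
proof -
  have 1: "a w * (t1 - t2) \<le> 0" "a w * (t3 - t2) \<le> 0"
    using assms by (auto simp: algebra_simps)
  have "a w \<noteq> 0" using assms by auto
  then consider "a w > 0" | "a w < 0" by linarith
  then show False
  proof cases
    case 1 then have "a w * (t3 - t2) > 0" using assms by simp
    then show False using \<open>a w * (t3 - t2) \<le> 0\<close> by simp
  next
    case 2 then have "a w * (t1 - t2) > 0" using assms by (simp add: mult_neg_neg)
    then show False using \<open>a w * (t1 - t2) \<le> 0\<close> by simp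
  qed
qed

lemma zero_exists_pos:
  fixes a b :: "'w \<Rightarrow> real"
  assumes "finite A" "\<forall>w\<in>A. a w \<noteq> 0" "\<forall>w\<in>A. a w*zz+b w \<le> 0" "wa \<in> A" "a wa > 0"
  shows "\<exists>t. (\<forall>w\<in>A. a w*t+b w \<le> 0) \<and> (\<exists>w\<in>A. a w*t+b w = 0)"
proof -
  define B where "B = {w\<in>A. a w > 0}"
  have fB: "finite B" "B \<noteq> {}" using assms B_def by auto
  define t where "t = Min ((\<lambda>w. - b w / a w) ` B)"
  have "t \<in> (\<lambda>w. - b w / a w) ` B" unfolding t_def using fB by (intro Min_in) auto
  then obtain w1 where w1: "w1 \<in> B" "t = - b w1 / a w1" by blast
  have tle: "\<And>w. w \<in> B \<Longrightarrow> t \<le> - b w / a w" using fB t_def by simp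
  have pw1: "a w1 > 0" "w1 \<in> A" using w1 B_def by auto
  have "a w1 * t + b w1 = 0" using w1 pw1 by (simp add: field_simps)
  moreover have "a w1 * zz + b w1 \<le> 0" using assms(3) pw1 by blast
  ultimately have "a w1 * zz \<le> a w1 * t" by linarith
  then have zzle: "zz \<le> t" using pw1 by simp
  have all: "\<forall>w\<in>A. a w*t+b w \<le> 0"
  proof
    fix w assume w: "w \<in> A"
    show "a w*t+b w \<le> 0"
    proof (cases "a w > 0")
      case True
      then have "w \<in> B" using w B_def by simp
      then have "t \<le> - b w / a w" by (rule tle)
      then show ?thesis using True by (simp add: field_simps)
    next
      case False
      then have "a w * t \<le> a w * zz" using zzle by (simp add: mult_left_mono_neg)
      then show ?thesis using assms(3) w by auto
    qed
  qed
  moreover have "a w1*t+b w1 = 0" using w1 B_def by (simp add: field_simps)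
  ultimately show ?thesis using pw1(2) by blast
qed

lemma zero_exists:
  fixes a b :: "'w \<Rightarrow> real"
  assumes "finite A" "A \<noteq> {}" "\<forall>w\<in>A. a w \<noteq> 0" "\<forall>w\<in>A. a w*zz+b w \<le> 0"
  shows "\<exists>t. (\<forall>w\<in>A. a w*t+b w \<le> 0) \<and> (\<exists>w\<in>A. a w*t+b w = 0)"
proof (cases "\<exists>w\<in>A. a w > 0")
  case True
  then show ?thesis using zero_exists_pos[OF assms(1,3,4)] by blast
next
  case False
  then obtain wa where wa: "wa \<in> A" "a wa < 0" using assms(2,3) by (metis all_not_in_conv linorder_neqE_linordered_idom)
  have "\<exists>t. (\<forall>w\<in>A. (- a w)*t+b w \<le> 0) \<and> (\<exists>w\<in>A. (- a w)*t+b w = 0)"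
    by (rule zero_exists_pos[where zz="-zz" and wa=wa]) (use assms wa in auto)
  then obtain t where "(\<forall>w\<in>A. (- a w)*t+b w \<le> 0) \<and> (\<exists>w\<in>A. (- a w)*t+b w = 0)" by blast
  then have "(\<forall>w\<in>A. a w*(-t)+b w \<le> 0) \<and> (\<exists>w\<in>A. a w*(-t)+b w = 0)" by simp
  then show ?thesis by blast
qed


lemma frontier_vor:
  fixes p :: pt
  assumes "finite U" "p \<notin> U"
  shows "frontier {x. \<forall>w\<in>U. dist x p \<le> dist x w} =
    {x. (\<forall>w\<in>U. dist x p \<le> dist x w) \<and> (\<exists>w\<in>U. dist x p = dist x w)}"
proof -
  define V where "V = {x. \<forall>w\<in>U. dist x p \<le> dist x w}"
  have "V = (\<Inter>w\<in>U. {x. dist x p \<le> dist x w})" unfolding V_def by auto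
  moreover have "\<forall>w\<in>U. closed {x. dist x p \<le> dist x w}"
    by (intro ballI closed_Collect_le continuous_intros)
  ultimately have cV: "closed V" by auto
  have fr: "frontier V = V - interior V" using cV by (simp add: frontier_def closure_closed)
  have key: "x \<in> interior V \<longleftrightarrow> \<not> (\<exists>w\<in>U. dist x p = dist x w)" if xV: "x \<in> V" for x
  proof
    assume xi: "x \<in> interior V"
    show "\<not> (\<exists>w\<in>U. dist x p = dist x w)"
    proof
      assume "\<exists>w\<in>U. dist x p = dist x w"
      then obtain w where w: "w \<in> U" "dist x p = dist x w" by blast
      obtain e where e: "e > 0" "ball x e \<subseteq> V" using xi mem_interior by blast
      have wp: "w - p \<noteq> 0" using w assms by auto
      then have np: "norm (w - p) > 0" by simp
      define c where "c = e / 2 / norm (w - p)"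
      have c: "c > 0" using e np c_def by simp
      define y where "y = x + c *\<^sub>R (w - p)"
      have "dist x y = c * norm (w - p)" unfolding y_def using c by (simp add: dist_norm)
      also have "\<dots> = e / 2" using np c_def by simp
      finally have "y \<in> ball x e" using e by simp
      then have "y \<in> V" using e by blast
      then have "dist y p \<le> dist y w" using w V_def by blast
      then have 1: "2 * (y \<bullet> (w - p)) + (p \<bullet> p - w \<bullet> w) \<le> 0" by (simp add: dist_le_aff)
      have 2: "2 * (x \<bullet> (w - p)) + (p \<bullet> p - w \<bullet> w) = 0" using w(2) by (simp add: dist_eq_aff)
      have "y \<bullet> (w - p) = x \<bullet> (w - p) + c * ((w - p) \<bullet> (w - p))"
        unfolding y_def by (simp add: inner_add_left)
      moreover have "(w - p) \<bullet> (w - p) > 0" using wp by simp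
      ultimately have "y \<bullet> (w - p) > x \<bullet> (w - p)" using c by simp
      then show False using 1 2 by linarith
    qed
  next
    assume nt: "\<not> (\<exists>w\<in>U. dist x p = dist x w)"
    define Op where "Op = (\<Inter>w\<in>U. {x. dist x p < dist x w})"
    have "open Op" unfolding Op_def
      by (intro open_INT assms(1) ballI open_Collect_less continuous_intros)
    moreover have "x \<in> Op" using nt xV unfolding Op_def V_def by force
    moreover have "Op \<subseteq> V" unfolding Op_def V_def by (force simp: less_imp_le)
    ultimately show "x \<in> interior V" by (meson interiorI)
  qed
  show ?thesis unfolding V_def[symmetric] fr using key by (auto simp: V_def)
qed

lemma seg:
  fixes p q x :: pt
  assumes "x \<in> voronoi_region (insert q W) q" "dist x p \<le> dist x q" "p \<noteq> q"
  shows "\<exists>y. dist y p = dist y q \<and> (\<forall>w\<in>W. dist y q \<le> dist y w)"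
proof -
  define h where "h y = 2 * (y \<bullet> (q - p)) + (p \<bullet> p - q \<bullet> q)" for y
  have hx: "h x \<le> 0" using assms(2) by (simp add: h_def dist_le_aff)
  have hq: "h q > 0"
  proof -
    have "dist q p > 0" using assms(3) by simp
    then have 1: "(dist q p)^2 > 0" by simp
    have 2: "(dist q p)^2 - (dist q q)^2 = h q" unfolding h_def by (rule dist_sq_aff)
    have 3: "(dist q q)^2 = 0" by simp
    show ?thesis using 1 2 3 by linarith
  qed
  define s where "s = - h x / (h q - h x)"
  have s: "0 \<le> s" "s \<le> 1" using hx hq by (auto simp: s_def field_simps)
  define y where "y = (1 - s) *\<^sub>R x + s *\<^sub>R q"
  have lin: "2 * (y \<bullet> c) + k = (1 - s) * (2 * (x \<bullet> c) + k) + s * (2 * (q \<bullet> c) + k)" for c k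
    unfolding y_def by (simp add: inner_add_left algebra_simps)
  have "h y = (1 - s) * h x + s * h q" unfolding h_def by (rule lin)
  also have "\<dots> = 0" using hx hq by (simp add: s_def field_simps)
  finally have "dist y p = dist y q" by (simp add: h_def dist_eq_aff)
  moreover have "dist y q \<le> dist y w" if w: "w \<in> W" for w
  proof -
    have "dist x q \<le> dist x w" using assms(1) w by (simp add: voronoi_region_def)
    then have a1: "2 * (x \<bullet> (w - q)) + (q \<bullet> q - w \<bullet> w) \<le> 0" by (simp add: dist_le_aff)
    have "dist q q \<le> dist q w" by simp
    then have a2: "2 * (q \<bullet> (w - q)) + (q \<bullet> q - w \<bullet> w) \<le> 0" by (simp only: dist_le_aff)
    have "(1 - s) * (2 * (x \<bullet> (w - q)) + (q \<bullet> q - w \<bullet> w)) \<le> 0"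
      using a1 s by (simp add: mult_nonneg_nonpos)
    moreover have "s * (2 * (q \<bullet> (w - q)) + (q \<bullet> q - w \<bullet> w)) \<le> 0"
      using a2 s by (simp add: mult_nonneg_nonpos)
    ultimately have "2 * (y \<bullet> (w - q)) + (q \<bullet> q - w \<bullet> w) \<le> 0" using lin by simp
    then show ?thesis by (simp add: dist_le_aff)
  qed
  ultimately show ?thesis by blast
qed


theorem mainTheorem4:
  fixes P W :: "pt set" and p q :: pt
  assumes "finite P" and "finite W" and "card P > 1" and "card W > 1"
    and "general_position (P \<union> W)"
    and "p \<in> P" and "q \<in> P" and "p \<noteq> q"
  defines "Vp \<equiv> voronoi_region (insert p W) p"
    and "Vq \<equiv> voronoi_region (insert q W) q"
  shows "(frontier Vp \<inter> frontier Vq = {} \<or>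
          (finite (frontier Vp \<inter> frontier Vq) \<and> card (frontier Vp \<inter> frontier Vq) \<le> 2) \<or>
          (connected (frontier Vp \<inter> frontier Vq) \<and> collinear (frontier Vp \<inter> frontier Vq)))
       \<and> (Vp \<inter> Vq \<noteq> {} \<longrightarrow> frontier Vp \<inter> frontier Vq \<noteq> {})
       \<and> (W \<noteq> {p, q} \<longrightarrow> (witness_adj P W p q \<longleftrightarrow> frontier Vp \<inter> frontier Vq \<noteq> {}))"
proof -
  have VpE: "Vp = {x. \<forall>w\<in>W-{p}. dist x p \<le> dist x w}"
    unfolding Vp_def voronoi_region_def by auto
  have VqE: "Vq = {x. \<forall>w\<in>W-{q}. dist x q \<le> dist x w}"
    unfolding Vq_def voronoi_region_def by auto
  have fVp: "frontier Vp = {x. (\<forall>w\<in>W-{p}. dist x p \<le> dist x w) \<and> (\<exists>w\<in>W-{p}. dist x p = dist x w)}"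
    unfolding VpE using assms(2) by (intro frontier_vor) auto
  have fVq: "frontier Vq = {x. (\<forall>w\<in>W-{q}. dist x q \<le> dist x w) \<and> (\<exists>w\<in>W-{q}. dist x q = dist x w)}"
    unfolding VqE using assms(2) by (intro frontier_vor) auto
  define W' where "W' = W - {p, q}"
  define I where "I = frontier Vp \<inter> frontier Vq"
  define both where "both = (p \<in> W \<and> q \<in> W)"
  have I_eq: "I = {x. dist x p = dist x q \<and> (\<forall>w\<in>W'. dist x p \<le> dist x w) \<and>
                   (both \<or> (\<exists>w\<in>W'. dist x p = dist x w))}"
  proof (intro set_eqI iffI)
    fix x assume "x \<in> I"
    then have Ap: "\<forall>w\<in>W-{p}. dist x p \<le> dist x w" and Aq: "\<forall>w\<in>W-{q}. dist x q \<le> dist x w"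
      and tp: "\<exists>w\<in>W-{p}. dist x p = dist x w" and tq: "\<exists>w\<in>W-{q}. dist x q = dist x w"
      unfolding I_def fVp fVq by auto
    obtain w1 where w1: "w1 \<in> W-{p}" "dist x p = dist x w1" using tp by blast
    obtain w2 where w2: "w2 \<in> W-{q}" "dist x q = dist x w2" using tq by blast
    have le1: "dist x p \<le> dist x q"
    proof (cases "w2 = p")
      case True then show ?thesis using w2 by simp
    next
      case False then show ?thesis using w2 Ap by force
    qed
    have le2: "dist x q \<le> dist x p"
    proof (cases "w1 = q")
      case True then show ?thesis using w1 by simp
    next
      case False then show ?thesis using w1 Aq by force
    qed
    have eq: "dist x p = dist x q" using le1 le2 by simp
    have tie: "both \<or> (\<exists>w\<in>W'. dist x p = dist x w)"
    proof (cases "w1 = q")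
      case False then show ?thesis using w1 W'_def by auto
    next
      case True
      show ?thesis
      proof (cases both)
        case False
        then have "p \<notin> W" using True w1 both_def by auto
        then have "w2 \<in> W'" using w2 W'_def by auto
        then show ?thesis using w2 eq by auto
      qed simp
    qed
    show "x \<in> {x. dist x p = dist x q \<and> (\<forall>w\<in>W'. dist x p \<le> dist x w) \<and>
                   (both \<or> (\<exists>w\<in>W'. dist x p = dist x w))}"
    proof -
      have "\<forall>w\<in>W'. dist x p \<le> dist x w" using Ap W'_def by auto
      then show ?thesis using eq tie by blast
    qed
  next
    fix x assume "x \<in> {x. dist x p = dist x q \<and> (\<forall>w\<in>W'. dist x p \<le> dist x w) \<and>
                   (both \<or> (\<exists>w\<in>W'. dist x p = dist x w))}"
    then have eq: "dist x p = dist x q" and A: "\<forall>w\<in>W'. dist x p \<le> dist x w"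
      and t: "both \<or> (\<exists>w\<in>W'. dist x p = dist x w)" by blast+
    have Ap: "\<forall>w\<in>W-{p}. dist x p \<le> dist x w"
    proof
      fix w assume "w \<in> W-{p}"
      then show "dist x p \<le> dist x w" using A eq W'_def by (cases "w = q") auto
    qed
    have Aq: "\<forall>w\<in>W-{q}. dist x q \<le> dist x w"
    proof
      fix w assume "w \<in> W-{q}"
      then show "dist x q \<le> dist x w" using A eq W'_def by (cases "w = p") auto
    qed
    have tp: "\<exists>w\<in>W-{p}. dist x p = dist x w" and tq: "\<exists>w\<in>W-{q}. dist x q = dist x w"
    proof -
      show "\<exists>w\<in>W-{p}. dist x p = dist x w"
      proof (cases both)
        case True then show ?thesis using eq assms(8) both_def by (intro bexI[of _ q]) auto
      next
        case False then show ?thesis using t W'_def by auto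
      qed
      show "\<exists>w\<in>W-{q}. dist x q = dist x w"
      proof (cases both)
        case True then show ?thesis using eq assms(8) both_def by (intro bexI[of _ p]) auto
      next
        case False then show ?thesis using t eq W'_def by auto
      qed
    qed
    show "x \<in> I" unfolding I_def fVp fVq using Ap Aq tp tq by auto
  qed
  define u where "u = q - p"
  define d :: pt where "d = (\<chi> i. if i = 1 then - (u$2) else u$1)"
  have d1: "d$1 = - (u$2)" and d2: "d$2 = u$1" by (simp_all add: d_def)
  have u0: "u \<noteq> 0" using assms(8) u_def by simp
  have d0: "d \<noteq> 0"
  proof
    assume "d = 0"
    then have "u$1 = 0" "u$2 = 0" using d1 d2 by auto
    then have "u = 0" by (simp add: vec_eq_iff forall_2)
    with u0 show False by simp
  qed
  have du: "d \<bullet> u = 0" by (simp add: inner_vec_def sum_2 d1 d2)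
  define m where "m = (1/2) *\<^sub>R (p + q)"
  define \<phi> where "\<phi> t = m + t *\<^sub>R d" for t
  define a where "a w = 2 * (d \<bullet> (w - p))" for w
  define b where "b w = 2 * (m \<bullet> (w - p)) + (p \<bullet> p - w \<bullet> w)" for w
  have aff: "2 * (\<phi> t \<bullet> (w - p)) + (p \<bullet> p - w \<bullet> w) = a w * t + b w" for t w
    unfolding \<phi>_def a_def b_def by (simp add: inner_add_left algebra_simps)
  have le\<phi>: "dist (\<phi> t) p \<le> dist (\<phi> t) w \<longleftrightarrow> a w * t + b w \<le> 0" for t w
    using aff[of t w] by (simp add: dist_le_aff)
  have eq\<phi>: "dist (\<phi> t) p = dist (\<phi> t) w \<longleftrightarrow> a w * t + b w = 0" for t w
    using aff[of t w] by (simp add: dist_eq_aff)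
  have bq: "a q = 0" "b q = 0"
  proof -
    show "a q = 0" using du unfolding a_def u_def by simp
    have "m \<bullet> (q - p) = (q \<bullet> q - p \<bullet> p) / 2"
      unfolding m_def by (simp add: inner_add_left inner_diff_right inner_commute algebra_simps)
    then show "b q = 0" unfolding b_def by simp
  qed
  have bis: "dist x p = dist x q \<longleftrightarrow> x \<in> range \<phi>" for x
  proof
    assume e: "dist x p = dist x q"
    define v where "v = x - m"
    have "2 * (x \<bullet> (q - p)) + (p \<bullet> p - q \<bullet> q) = 0" using e by (simp add: dist_eq_aff)
    moreover have "m \<bullet> (q - p) = (q \<bullet> q - p \<bullet> p) / 2"
      unfolding m_def by (simp add: inner_add_left inner_diff_right inner_commute algebra_simps)
    ultimately have vu: "v \<bullet> u = 0" unfolding v_def u_def by (simp add: inner_diff_left)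
    have "d$1 * v$2 - d$2 * v$1 = - (v \<bullet> u)"
      by (simp add: d1 d2 inner_vec_def sum_2 algebra_simps)
    then have "v = ((v \<bullet> d) / (d \<bullet> d)) *\<^sub>R d" using vu d0 by (intro perp2) auto
    then have "x = \<phi> ((v \<bullet> d) / (d \<bullet> d))" unfolding \<phi>_def v_def by (metis add.commute diff_add_cancel)
    then show "x \<in> range \<phi>" by blast
  next
    assume "x \<in> range \<phi>"
    then obtain t where "x = \<phi> t" by blast
    then show "dist x p = dist x q" using eq\<phi>[of t q] bq by simp
  qed
  have aw: "a w \<noteq> 0" if w: "w \<in> W'" for w
  proof
    assume "a w = 0"
    then have dw: "d \<bullet> (w - p) = 0" unfolding a_def by simp
    have "u$1 * (w - p)$2 - u$2 * (w - p)$1 = d \<bullet> (w - p)"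
      by (simp add: d1 d2 inner_vec_def sum_2 algebra_simps)
    then have "w - p = (((w - p) \<bullet> u) / (u \<bullet> u)) *\<^sub>R u" using dw u0 by (intro perp2) auto
    then have "collinear {0, q - p, w - p}" unfolding u_def
      by (subst collinear_lemma) blast
    then have "collinear {q, p, w}" by (subst collinear_3) simp
    moreover have "{q, p, w} = {p, q, w}" by auto
    ultimately have c: "collinear {p, q, w}" by simp
    have wP: "w \<in> P \<union> W" "w \<noteq> p" "w \<noteq> q" using w W'_def by auto
    have pP: "p \<in> P \<union> W" "q \<in> P \<union> W" using assms(6,7) by auto
    have gp: "\<forall>x\<in>P \<union> W. \<forall>y\<in>P \<union> W. \<forall>z\<in>P \<union> W. x \<noteq> y \<and> x \<noteq> z \<and> y \<noteq> z \<longrightarrow> \<not> collinear {x, y, z}"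
      using assms(5) unfolding general_position_def by (elim conjE) assumption
    have "\<not> collinear {p, q, w}" using gp[rule_format, OF pP(1) pP(2) wP(1)] wP(2,3) assms(8) by simp
    then show False using c by simp
  qed
  define T where "T = {t. \<forall>w\<in>W'. a w * t + b w \<le> 0}"
  define Z where "Z = {t. (\<forall>w\<in>W'. a w * t + b w \<le> 0) \<and> (\<exists>w\<in>W'. a w * t + b w = 0)}"
  define S where "S = {x. dist x p = dist x q \<and> (\<forall>w\<in>W'. dist x p \<le> dist x w)}"
  have S_eq: "S = \<phi> ` T"
  proof (intro set_eqI iffI)
    fix x assume "x \<in> S"
    then obtain t where t: "x = \<phi> t" using bis S_def by blast
    then show "x \<in> \<phi> ` T" using \<open>x \<in> S\<close> le\<phi> unfolding S_def T_def by auto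
  next
    fix x assume "x \<in> \<phi> ` T"
    then obtain t where t: "x = \<phi> t" "t \<in> T" by blast
    then show "x \<in> S" using le\<phi> bis unfolding S_def T_def by auto
  qed
  have I_both: "I = S" if both using that I_eq S_def by auto
  have I_nb: "I = \<phi> ` Z" if "\<not> both"
  proof (intro set_eqI iffI)
    fix x assume "x \<in> I"
    then have xd: "dist x p = dist x q" using I_eq by auto
    then obtain t where t: "x = \<phi> t" using bis by blast
    then show "x \<in> \<phi> ` Z" using \<open>x \<in> I\<close> that le\<phi> eq\<phi> unfolding I_eq Z_def by auto
  next
    fix x assume "x \<in> \<phi> ` Z"
    then obtain t where t: "x = \<phi> t" "t \<in> Z" by blast
    then show "x \<in> I" using le\<phi> eq\<phi> bis unfolding I_eq Z_def by auto
  qed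
  have SI: "I \<noteq> {}" if Sne: "S \<noteq> {}"
  proof (cases both)
    case True then show ?thesis using I_both Sne by simp
  next
    case False
    have W'ne: "W' \<noteq> {}"
    proof
      assume "W' = {}"
      then have "W \<subseteq> {p, q}" using W'_def by auto
      then have "W \<subseteq> {p} \<or> W \<subseteq> {q}" using False both_def by auto
      then have "card W \<le> 1"
      proof
        assume "W \<subseteq> {p}" then have "card W \<le> card {p}" by (intro card_mono) auto
        then show ?thesis by simp
      next
        assume "W \<subseteq> {q}" then have "card W \<le> card {q}" by (intro card_mono) auto
        then show ?thesis by simp
      qed
      then show False using assms(4) by simp
    qed
    obtain tz where "tz \<in> T" using Sne S_eq by blast
    then have "\<exists>t. (\<forall>w\<in>W'. a w*t+b w \<le> 0) \<and> (\<exists>w\<in>W'. a w*t+b w = 0)"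
      using W'ne aw assms(2) W'_def T_def by (intro zero_exists) auto
    then have "Z \<noteq> {}" unfolding Z_def by blast
    then show ?thesis using I_nb False by simp
  qed
  have part1: "I = {} \<or> (finite I \<and> card I \<le> 2) \<or> (connected I \<and> collinear I)"
  proof (cases both)
    case True
    have "T = (\<Inter>w\<in>W'. {t. (a w) \<bullet> t \<le> - b w})" unfolding T_def
      by (auto simp: inner_real_def algebra_simps; smt (verit))
    moreover have "convex (\<Inter>w\<in>W'. {t::real. (a w) \<bullet> t \<le> - b w})"
      by (intro convex_INT ballI convex_halfspace_le)
    ultimately have cT: "convex T" by simp
    have "continuous_on T \<phi>" unfolding \<phi>_def by (intro continuous_intros)
    then have "connected (\<phi> ` T)" using cT convex_connected connected_continuous_image by blast
    moreover have "collinear (\<phi> ` T)" unfolding collinear_def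
    proof (intro exI[of _ d] ballI)
      fix x y assume "x \<in> \<phi> ` T" "y \<in> \<phi> ` T"
      then obtain s t where "x = \<phi> s" "y = \<phi> t" by blast
      then have "x - y = (s - t) *\<^sub>R d" unfolding \<phi>_def by (simp add: algebra_simps)
      then show "\<exists>c. x - y = c *\<^sub>R d" by blast
    qed
    ultimately show ?thesis using I_both True S_eq by simp
  next
    case False
    have "finite Z \<and> card Z \<le> 2"
    proof (rule three_le2)
      have mid: False if tt: "t1 \<in> Z" "t2 \<in> Z" "t3 \<in> Z" "t1 < t2" "t2 < t3" for t1 t2 t3
      proof -
        obtain w where w2: "w \<in> W'" "a w * t2 + b w = 0" using tt(2) Z_def by blast
        have h0: "\<forall>w\<in>W'. a w \<noteq> 0" using aw by blast
        have h1: "\<forall>w\<in>W'. a w*t1+b w \<le> 0" "\<forall>w\<in>W'. a w*t3+b w \<le> 0" using tt(1,3) Z_def by auto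
        show False by (rule zero_mid[OF h0 h1(1) h1(2) w2(1) w2(2) tt(4) tt(5)])
      qed
      fix x y z assume "x \<in> Z" "y \<in> Z" "z \<in> Z" "x \<noteq> y" "x \<noteq> z" "y \<noteq> z"
      then show False using mid by (metis linorder_neqE_linordered_idom)
    qed
    then have "finite (\<phi> ` Z) \<and> card (\<phi> ` Z) \<le> 2" using card_image_le le_trans by blast
    then show ?thesis using I_nb False by simp
  qed
  have part2: "Vp \<inter> Vq \<noteq> {} \<longrightarrow> I \<noteq> {}"
  proof
    assume "Vp \<inter> Vq \<noteq> {}"
    then obtain x where x: "x \<in> Vp" "x \<in> Vq" by blast
    have "S \<noteq> {}"
    proof (cases "dist x p \<le> dist x q")
      case True
      obtain y where y: "dist y p = dist y q" "\<forall>w\<in>W. dist y q \<le> dist y w"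
        using seg[of x q W p] x True assms(8) Vq_def by blast
      then have "y \<in> S" unfolding S_def W'_def by auto
      then show ?thesis by blast
    next
      case False
      obtain y where y: "dist y q = dist y p" "\<forall>w\<in>W. dist y p \<le> dist y w"
        using seg[of x p W q] x False assms(8) Vp_def by fastforce
      then have "y \<in> S" unfolding S_def W'_def by auto
      then show ?thesis by blast
    qed
    then show "I \<noteq> {}" by (rule SI)
  qed
  have adj: "witness_adj P W p q \<longleftrightarrow> S \<noteq> {}"
  proof
    assume "witness_adj P W p q"
    then obtain c r where cr: "r > 0" "dist c p = r" "dist c q = r" "ball c r \<inter> W = {}"
      unfolding witness_adj_def by blast
    have "\<forall>w\<in>W. dist c p \<le> dist c w"
    proof
      fix w assume "w \<in> W"
      then have "w \<notin> ball c r" using cr(4) by blast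
      then show "dist c p \<le> dist c w" using cr(2) by (simp add: not_less)
    qed
    then have "c \<in> S" using cr unfolding S_def W'_def by auto
    then show "S \<noteq> {}" by blast
  next
    assume "S \<noteq> {}"
    then obtain c where c: "dist c p = dist c q" "\<forall>w\<in>W'. dist c p \<le> dist c w" unfolding S_def by blast
    have r: "dist c p > 0"
    proof (rule ccontr)
      assume "\<not> dist c p > 0"
      then have "c = p" by simp
      then show False using c(1) assms(8) by simp
    qed
    have "\<forall>w\<in>W. dist c p \<le> dist c w"
    proof
      fix w assume "w \<in> W"
      then show "dist c p \<le> dist c w" using c W'_def by (cases "w = p \<or> w = q") auto
    qed
    then have "ball c (dist c p) \<inter> W = {}" by (auto simp: not_less)
    then show "witness_adj P W p q" unfolding witness_adj_def using assms(6,7,8) r c(1) by metis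
  qed
  have ISsub: "I \<noteq> {} \<Longrightarrow> S \<noteq> {}" using I_eq S_def by auto
  have part3: "witness_adj P W p q \<longleftrightarrow> I \<noteq> {}" using adj SI ISsub by blast
  show ?thesis using part1 part2 part3 unfolding I_def by blast
qed

end
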